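(* Let $A,B\subset\mathbb{R}^n$ be set-germs at $0$ with $0\in\overline{A}\cap\overline{B}$ and let $h:(\mathbb{R}^n,0)\to(\mathbb{R}^n,0)$ be a bi-Lipschitz homeomorphism (germ). If $A$ and $B$ are $ST$-equivalent, then $h(A)$ and $h(B)$ are $ST$-equivalent.
   Context: A bi-Lipschitz homeomorphism germ is a homeomorphism between neighbourhoods of $0$ fixing $0$ with $K_1|x-y|\le|h(x)-h(y)|\le K_2|x-y|$ for some $0<K_1\le K_2$ near $0$. Sea-tangle neighbourhood: $ST_d(A;C)=\{x\in\mathbb{R}^n : \mathrm{dist}(x,A)\le C|x|^d\}$ for $d,C>0$. $A$ and $B$ are $ST$-equivalent if there are $d_1,d_2>1$ and $C_1,C_2>0$ with $B\subset ST_{d_1}(A;C_1)$ and $A\subset ST_{d_2}(B;C_2)$ as germs at $0$ (after intersecting with some neighbourhood of $0$). *)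

theory Defs
  imports "HOL-Analysis.Analysis"
begin

text \<open>Sea-tangle neighbourhood ST_d(A;C) = {x. dist(x,A) \<le> C |x|^d}.
  The set A is a nonempty representative near 0 in all uses (0 is in its closure).\<close>
definition ST :: "real \<Rightarrow> 'a::euclidean_space set \<Rightarrow> real \<Rightarrow> 'a set" where
  "ST d A C = {x. infdist x A \<le> C * norm x powr d}"

definition ST_equivalent :: "'a::euclidean_space set \<Rightarrow> 'a set \<Rightarrow> bool" where
  "ST_equivalent A B \<longleftrightarrow>
     (\<exists>d1 d2 C1 C2 r. d1 > 1 \<and> d2 > 1 \<and> C1 > 0 \<and> C2 > 0 \<and> r > 0 \<and>
        B \<inter> ball 0 r \<subseteq> ST d1 A C1 \<and> A \<inter> ball 0 r \<subseteq> ST d2 B C2)"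

definition bilipschitz_homeo_germ :: "('a::euclidean_space \<Rightarrow> 'a) \<Rightarrow> 'a set \<Rightarrow> bool" where
  "bilipschitz_homeo_germ h U \<longleftrightarrow>
     open U \<and> 0 \<in> U \<and> h 0 = 0 \<and> open (h ` U) \<and>
     (\<exists>g. homeomorphism U (h ` U) h g) \<and>
     (\<exists>K1 K2. 0 < K1 \<and> K1 \<le> K2 \<and>
        (\<forall>x\<in>U. \<forall>y\<in>U. K1 * dist x y \<le> dist (h x) (h y) \<and> dist (h x) (h y) \<le> K2 * dist x y))"

end

theory Submission
  imports Defs
begin

lemma infdist_approx:
  fixes x :: "'a::metric_space"
  assumes "A \<noteq> {}" "infdist x A < m"
  shows "\<exists>a\<in>A. dist x a < m"
proof -
  have "(INF a\<in>A. dist x a) < m" using assms infdist_notempty by metis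
  moreover have "bdd_below ((\<lambda>a. dist x a) ` A)"
    by (rule bdd_belowI[of _ 0]) auto
  ultimately show ?thesis using cINF_less_iff[OF assms(1), of "\<lambda>a. dist x a" m] by blast
qed

lemma one_dir:
  fixes A B U :: "'a::euclidean_space set" and h :: "'a \<Rightarrow> 'a"
  assumes Ane: "A \<noteq> {}" and oU: "open U" and U0: "0 \<in> U" and h0: "h 0 = 0"
    and K1: "0 < K1" and K12: "K1 \<le> K2"
    and L: "\<forall>x\<in>U. \<forall>y\<in>U. K1 * dist x y \<le> dist (h x) (h y) \<and> dist (h x) (h y) \<le> K2 * dist x y"
    and d: "d > 1" and C: "C > 0" and r0: "r0 > 0"
    and inc: "B \<inter> ball 0 r0 \<subseteq> ST d A C"
  shows "\<exists>C' r. C' > 0 \<and> r > 0 \<and> h ` (B \<inter> U) \<inter> ball 0 r \<subseteq> ST d (h ` (A \<inter> U)) C'"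
proof -
  obtain \<rho> where \<rho>: "\<rho> > 0" "ball 0 \<rho> \<subseteq> U" using oU U0 open_contains_ball by blast
  define \<delta> where "\<delta> = min 1 (min r0 (\<rho> / (2 * (1 + C))))"
  have \<delta>: "\<delta> > 0" "\<delta> \<le> 1" "\<delta> \<le> r0" "(1 + C) * \<delta> \<le> \<rho> / 2"
  proof -
    have q: "\<delta> \<le> \<rho> / (2 * (1 + C))" unfolding \<delta>_def by linarith
    have "(1 + C) * \<delta> \<le> (1 + C) * (\<rho> / (2 * (1 + C)))"
      using mult_left_mono[OF q, of "1 + C"] C by simp
    also have "\<dots> = \<rho> / 2" using C by (simp add: field_simps)
    finally show "(1 + C) * \<delta> \<le> \<rho> / 2" .
    show "\<delta> > 0" using \<rho> C r0 by (simp add: \<delta>_def)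
    show "\<delta> \<le> 1" unfolding \<delta>_def by (rule min.cobounded1)
    show "\<delta> \<le> r0" unfolding \<delta>_def by linarith
  qed
  have K2: "K2 > 0" using K1 K12 by linarith
  define C' where "C' = K2 * C / K1 powr d"
  have C': "C' > 0" using K2 C K1 by (simp add: C'_def)
  show ?thesis
  proof (intro exI conjI)
    show "C' > 0" by (fact C')
    show "K1 * \<delta> > 0" using K1 \<delta> by simp
    show "h ` (B \<inter> U) \<inter> ball 0 (K1 * \<delta>) \<subseteq> ST d (h ` (A \<inter> U)) C'"
    proof
      fix z assume "z \<in> h ` (B \<inter> U) \<inter> ball 0 (K1 * \<delta>)"
      then obtain x where x: "x \<in> B" "x \<in> U" "z = h x" "norm z < K1 * \<delta>" by auto
      have "K1 * dist x 0 \<le> dist (h x) (h 0)" using L x(2) U0 by blast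
      hence "K1 * norm x \<le> norm z" using h0 x(3) by simp
      hence nxz: "norm x \<le> norm z / K1" using K1 by (simp add: field_simps)
      have "K1 * norm x < K1 * \<delta>" using \<open>K1 * norm x \<le> norm z\<close> x(4) by linarith
      hence nx: "norm x < \<delta>" using K1 by simp
      have "x \<in> ball 0 r0" using nx \<delta>(3) by simp
      hence "x \<in> ST d A C" using inc x(1) by blast
      hence ix: "infdist x A \<le> C * norm x powr d" by (simp add: ST_def)
      have pw: "norm x powr d \<le> norm x"
        using powr_mono'[of 1 d "norm x"] d nx \<delta> by auto
      have pw2: "norm x powr d \<le> norm z powr d / K1 powr d"
        using powr_mono2[of d "norm x" "norm z / K1"] nxz d K1 by (simp add: powr_divide)
      have "infdist z (h ` (A \<inter> U)) \<le> C' * norm z powr d"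
      proof (rule field_le_epsilon)
        fix e :: real assume e: "e > 0"
        define e' where "e' = min (e / K2) (\<rho> / 2)"
        have e'1: "e' \<le> e / K2" unfolding e'_def by (rule min.cobounded1)
        have e'2: "e' \<le> \<rho> / 2" unfolding e'_def by (rule min.cobounded2)
        have "e / K2 > 0" using e K2 by simp
        hence e'0: "e' > 0" unfolding e'_def using \<rho>(1) by simp
        note e' = e'0 e'1 e'2
        have "infdist x A < C * norm x powr d + e'" using ix e'(1) by linarith
        from infdist_approx[OF Ane this]
        obtain a where a: "a \<in> A" "dist x a < C * norm x powr d + e'" by blast
        have "norm a \<le> norm x + dist x a"
        proof -
          have "norm a \<le> norm x + norm (a - x)" using norm_triangle_ineq[of x "a - x"] by simp
          moreover have "norm (a - x) = dist x a" by (metis dist_commute dist_norm)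
          ultimately show ?thesis by linarith
        qed
        have m1: "C * norm x powr d \<le> C * norm x" using mult_left_mono[OF pw, of C] C by simp
        have m2: "(1 + C) * norm x \<le> (1 + C) * \<delta>" using mult_left_mono[of "norm x" \<delta> "1 + C"] nx C by simp
        have m3: "norm x + C * norm x = (1 + C) * norm x" by (simp add: algebra_simps)
        have "norm a < \<rho>" using \<open>norm a \<le> norm x + dist x a\<close> a(2) e'(3) m1 m2 m3 \<delta>(4) by linarith
        hence "a \<in> ball 0 \<rho>" by simp
        hence "a \<in> U" using \<rho>(2) by blast
        have m4: "K2 * C * norm x powr d \<le> K2 * C * (norm z powr d / K1 powr d)"
          using mult_left_mono[OF pw2, of "K2 * C"] K2 C by simp
        have m5: "K2 * e' \<le> e" using mult_left_mono[OF e'(2), of K2] K2 by simp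
        have "dist (h x) (h a) \<le> K2 * dist x a" using L x(2) \<open>a \<in> U\<close> by blast
        hence "dist z (h a) \<le> K2 * dist x a" using x(3) by simp
        also have "\<dots> \<le> K2 * (C * norm x powr d + e')"
          using mult_left_mono[of "dist x a" "C * norm x powr d + e'" K2] a(2) K2 by simp
        also have "\<dots> = K2 * C * norm x powr d + K2 * e'" by (simp add: algebra_simps)
        also have "\<dots> \<le> K2 * C * (norm z powr d / K1 powr d) + e"
          using m4 m5 by linarith
        also have "\<dots> = C' * norm z powr d + e" by (simp add: C'_def)
        finally have dz: "dist z (h a) \<le> C' * norm z powr d + e" .
        have ha: "h a \<in> h ` (A \<inter> U)" using a \<open>a \<in> U\<close> by auto
        show "infdist z (h ` (A \<inter> U)) \<le> C' * norm z powr d + e"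
          by (rule infdist_le2[OF ha dz])
      qed
      thus "z \<in> ST d (h ` (A \<inter> U)) C'" by (simp add: ST_def)
    qed
  qed
qed

lemma ST_mono_r:
  assumes "X \<inter> ball 0 r \<subseteq> Y" "r' \<le> r"
  shows "X \<inter> ball 0 r' \<subseteq> Y"
  using assms by auto

theorem proposition4p5:
  fixes A B U :: "'a::euclidean_space set" and h :: "'a \<Rightarrow> 'a"
  assumes "0 \<in> closure A" and "0 \<in> closure B"
    and "bilipschitz_homeo_germ h U"
    and "ST_equivalent A B"
  shows "ST_equivalent (h ` (A \<inter> U)) (h ` (B \<inter> U))"
proof -
  have Ane: "A \<noteq> {}" and Bne: "B \<noteq> {}" using assms(1,2) by auto
  have oU: "open U" and U0: "0 \<in> U" and h0: "h 0 = 0" and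
      "\<exists>K1 K2. 0 < K1 \<and> K1 \<le> K2 \<and>
        (\<forall>x\<in>U. \<forall>y\<in>U. K1 * dist x y \<le> dist (h x) (h y) \<and> dist (h x) (h y) \<le> K2 * dist x y)"
    using assms(3) unfolding bilipschitz_homeo_germ_def by simp_all
  then obtain K1 K2 where K: "0 < K1" "K1 \<le> K2"
    "\<forall>x\<in>U. \<forall>y\<in>U. K1 * dist x y \<le> dist (h x) (h y) \<and> dist (h x) (h y) \<le> K2 * dist x y"
    by blast
  obtain d1 d2 C1 C2 r where st: "d1 > 1" "d2 > 1" "C1 > 0" "C2 > 0" "r > 0"
    "B \<inter> ball 0 r \<subseteq> ST d1 A C1" "A \<inter> ball 0 r \<subseteq> ST d2 B C2"
    using assms(4) unfolding ST_equivalent_def by blast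
  obtain C1' r1 where 1: "C1' > 0" "r1 > 0" "h ` (B \<inter> U) \<inter> ball 0 r1 \<subseteq> ST d1 (h ` (A \<inter> U)) C1'"
    using one_dir[OF Ane oU U0 h0 K st(1,3,5,6)] by blast
  obtain C2' r2 where 2: "C2' > 0" "r2 > 0" "h ` (A \<inter> U) \<inter> ball 0 r2 \<subseteq> ST d2 (h ` (B \<inter> U)) C2'"
    using one_dir[OF Bne oU U0 h0 K st(2,4,5,7)] by blast
  have i1: "h ` (B \<inter> U) \<inter> ball 0 (min r1 r2) \<subseteq> ST d1 (h ` (A \<inter> U)) C1'"
    by (rule ST_mono_r[OF 1(3)]) simp
  have i2: "h ` (A \<inter> U) \<inter> ball 0 (min r1 r2) \<subseteq> ST d2 (h ` (B \<inter> U)) C2'"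
    by (rule ST_mono_r[OF 2(3)]) simp
  have m: "min r1 r2 > 0" using 1(2) 2(2) by simp
  show ?thesis unfolding ST_equivalent_def
    using st(1,2) 1(1) 2(1) m i1 i2 by blast
qed

end
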